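(* For the Byzantine-tolerant algorithm described in the context: let $\gamma$ be a degree-stabilized configuration and let $\gamma\xrightarrow{t}\gamma'$ be a transition in which the rule Candidacy? is executed on a node $u\in V_1$ (the set $t$ being arbitrary otherwise). Then, whatever the other moves in $t$ and the behaviour of Byzantine nodes, the probability that $s_u^{\gamma'}=\top$ and $s_v^{\gamma'}=\bot$ for all $v\in N(u)$ is at least $\frac{1}{e(\Delta+1)}$.
   Context: Network and model. $G=(V,E)$ is a finite simple undirected graph; $N(u)$ is the open neighbourhood of $u$, $N[u]=N(u)\cup\{u\}$, $\deg(u)=|N(u)|$, $\Delta=\max_{u\in V}\deg(u)$. Each node holds local variables; a configuration is an assignment of values to all local variables. A rule "guard $\to$ command" is enabled on $u$ in $\gamma$ if its guard (a predicate on the variables of $u$ and its neighbours) holds; its command rewrites only $u$'s variables, possibly randomly. A transition $\gamma\xrightarrow{t}\gamma'$ is given by a nonempty set $t$ of moves $(u,r)$ with $r$ enabled on $u$ in $\gamma$, at most one per node, all executed simultaneously from the values in $\gamma$, with independent random choices. Byzantine nodes. A subset $B\subseteq V$ consists of Byzantine nodes, which when activated may set their local variables to arbitrary values. $d(u,B)$ is the graph distance from $u$ to $B$ and $V_i=\{u\in V: d(u,B)>i\}$. Algorithm. Each node $u$ has variables $s_u\in\{\bot,\top\}$ and $x_u\in\mathbb{N}$; $Rand(q)$ returns $1$ with probability $q$, else $0$, independently for each call. Non-Byzantine nodes follow the rules: (Refresh) $x_u\neq \deg(u)\ \to\ x_u:=\deg(u)$. (Candidacy?) $x_u=\deg(u)\wedge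 s_u=\bot\wedge \forall v\in N(u),\ s_v=\bot\ \to$ if $Rand\big(\frac{1}{1+\max\{x_v: v\in N[u]\}}\big)=1$ then $s_u:=\top$. (Withdrawal) $x_u=\deg(u)\wedge s_u=\top\wedge \exists v\in N(u),\ s_v=\top\ \to\ s_u:=\bot$. $\gamma$ is degree-stabilized if $x_u^\gamma=\deg(u)$ for every non-Byzantine node $u$. *)

theory Defs
  imports "HOL-Probability.Probability"
begin

definition simple_graph :: "'a set \<Rightarrow> ('a \<Rightarrow> 'a \<Rightarrow> bool) \<Rightarrow> bool" where
  "simple_graph V E \<longleftrightarrow> finite V \<and> (\<forall>u v. E u v \<longrightarrow> u \<in> V \<and> v \<in> V)
     \<and> (\<forall>u v. E u v \<longrightarrow> E v u) \<and> (\<forall>u. \<not> E u u)"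

definition nbh :: "'a set \<Rightarrow> ('a \<Rightarrow> 'a \<Rightarrow> bool) \<Rightarrow> 'a \<Rightarrow> 'a set" where
  "nbh V E u = {v \<in> V. E u v}"

definition cnbh :: "'a set \<Rightarrow> ('a \<Rightarrow> 'a \<Rightarrow> bool) \<Rightarrow> 'a \<Rightarrow> 'a set" where
  "cnbh V E u = insert u (nbh V E u)"

definition deg :: "'a set \<Rightarrow> ('a \<Rightarrow> 'a \<Rightarrow> bool) \<Rightarrow> 'a \<Rightarrow> nat" where
  "deg V E u = card (nbh V E u)"

definition maxdeg :: "'a set \<Rightarrow> ('a \<Rightarrow> 'a \<Rightarrow> bool) \<Rightarrow> nat" where
  "maxdeg V E = Max (deg V E ` V)"

text \<open>Adjacency as a relation; \<open>d(u,B) \<le> i\<close> iff some Byzantine node is reached by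
  a walk of length at most i. \<open>V_i = {u. d(u,B) > i}\<close> (with d(u,{}) = \<infinity>).\<close>
definition adj :: "'a set \<Rightarrow> ('a \<Rightarrow> 'a \<Rightarrow> bool) \<Rightarrow> ('a \<times> 'a) set" where
  "adj V E = {(a, b). a \<in> V \<and> b \<in> V \<and> E a b}"

definition Vdist :: "'a set \<Rightarrow> ('a \<Rightarrow> 'a \<Rightarrow> bool) \<Rightarrow> 'a set \<Rightarrow> nat \<Rightarrow> 'a set" where
  "Vdist V E B i = {u \<in> V. \<not> (\<exists>k\<le>i. \<exists>b\<in>B. (u, b) \<in> adj V E ^^ k)}"

datatype sval = Bot | Top

type_synonym 'a cfg = "('a \<Rightarrow> sval) \<times> ('a \<Rightarrow> nat)"

definition s_of :: "'a cfg \<Rightarrow> 'a \<Rightarrow> sval" where "s_of g = fst g"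
definition x_of :: "'a cfg \<Rightarrow> 'a \<Rightarrow> nat" where "x_of g = snd g"

text \<open>Moves: the three rules of non-Byzantine nodes, and an arbitrary
  rewrite (new values of s and x) of a Byzantine node.\<close>
datatype move = Refresh | Candidacy | Withdrawal | ByzMove sval nat

definition refresh_enabled :: "'a set \<Rightarrow> ('a \<Rightarrow> 'a \<Rightarrow> bool) \<Rightarrow> 'a cfg \<Rightarrow> 'a \<Rightarrow> bool" where
  "refresh_enabled V E g u \<longleftrightarrow> x_of g u \<noteq> deg V E u"

definition cand_enabled :: "'a set \<Rightarrow> ('a \<Rightarrow> 'a \<Rightarrow> bool) \<Rightarrow> 'a cfg \<Rightarrow> 'a \<Rightarrow> bool" where
  "cand_enabled V E g u \<longleftrightarrow> x_of g u = deg V E u \<and> s_of g u = Bot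
      \<and> (\<forall>v\<in>nbh V E u. s_of g v = Bot)"

definition withd_enabled :: "'a set \<Rightarrow> ('a \<Rightarrow> 'a \<Rightarrow> bool) \<Rightarrow> 'a cfg \<Rightarrow> 'a \<Rightarrow> bool" where
  "withd_enabled V E g u \<longleftrightarrow> x_of g u = deg V E u \<and> s_of g u = Top
      \<and> (\<exists>v\<in>nbh V E u. s_of g v = Top)"

definition cand_prob :: "'a set \<Rightarrow> ('a \<Rightarrow> 'a \<Rightarrow> bool) \<Rightarrow> 'a cfg \<Rightarrow> 'a \<Rightarrow> real" where
  "cand_prob V E g u = 1 / (1 + real (Max (x_of g ` cnbh V E u)))"

text \<open>A transition is given by a map t from nodes to at most one move each;
  it is valid if it is nonempty, every move of a non-Byzantine node is an
  enabled rule, Byzantine nodes only perform Byzantine moves, and only nodes of V move.\<close>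
definition valid_transition ::
  "'a set \<Rightarrow> ('a \<Rightarrow> 'a \<Rightarrow> bool) \<Rightarrow> 'a set \<Rightarrow> 'a cfg \<Rightarrow> ('a \<Rightarrow> move option) \<Rightarrow> bool" where
  "valid_transition V E B g t \<longleftrightarrow>
     (\<exists>u. t u \<noteq> None) \<and>
     (\<forall>u. u \<notin> V \<longrightarrow> t u = None) \<and>
     (\<forall>u\<in>V - B. t u = None \<or>
        (t u = Some Refresh \<and> refresh_enabled V E g u) \<or>
        (t u = Some Candidacy \<and> cand_enabled V E g u) \<or>
        (t u = Some Withdrawal \<and> withd_enabled V E g u)) \<and>
     (\<forall>u\<in>B. t u = None \<or> (\<exists>a n. t u = Some (ByzMove a n)))"

text \<open>Outcome of executing the transition t from g, given the results c of the
  random calls (c u is the result of Rand on node u).\<close>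
definition step :: "'a set \<Rightarrow> ('a \<Rightarrow> 'a \<Rightarrow> bool) \<Rightarrow> 'a cfg \<Rightarrow> ('a \<Rightarrow> move option)
    \<Rightarrow> ('a \<Rightarrow> bool) \<Rightarrow> 'a cfg" where
  "step V E g t c =
     ((\<lambda>u. case t u of
            Some Candidacy \<Rightarrow> (if c u then Top else s_of g u)
          | Some Withdrawal \<Rightarrow> Bot
          | Some (ByzMove a n) \<Rightarrow> a
          | _ \<Rightarrow> s_of g u),
      (\<lambda>u. case t u of
            Some Refresh \<Rightarrow> deg V E u
          | Some (ByzMove a n) \<Rightarrow> n
          | _ \<Rightarrow> x_of g u))"

definition coins :: "'a set \<Rightarrow> ('a \<Rightarrow> 'a \<Rightarrow> bool) \<Rightarrow> 'a cfg \<Rightarrow> ('a \<Rightarrow> move option)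
    \<Rightarrow> ('a \<Rightarrow> bool) pmf" where
  "coins V E g t = Pi_pmf {v \<in> V. t v = Some Candidacy} False
      (\<lambda>v. bernoulli_pmf (cand_prob V E g v))"

definition trans_dist :: "'a set \<Rightarrow> ('a \<Rightarrow> 'a \<Rightarrow> bool) \<Rightarrow> 'a cfg \<Rightarrow> ('a \<Rightarrow> move option)
    \<Rightarrow> 'a cfg pmf" where
  "trans_dist V E g t = map_pmf (step V E g t) (coins V E g t)"

definition degree_stabilized :: "'a set \<Rightarrow> ('a \<Rightarrow> 'a \<Rightarrow> bool) \<Rightarrow> 'a set \<Rightarrow> 'a cfg \<Rightarrow> bool" where
  "degree_stabilized V E B g \<longleftrightarrow> (\<forall>u\<in>V - B. x_of g u = deg V E u)"

end

theory Submission
  imports Defs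
begin

lemma key_ineq:
  fixes d :: nat
  shows "exp (-1) \<le> (real d / (real d + 1)) ^ d"
proof (cases "d = 0")
  case True then show ?thesis by simp
next
  case False
  have h: "(1 + 1 / real d) ^ d \<le> exp 1"
    using exp_ge_one_plus_x_over_n_power_n[of d 1] False by simp
  have pos: "0 < (1 + 1 / real d) ^ d" by (intro zero_less_power) (simp add: add_pos_nonneg)
  have eq: "real d / (real d + 1) = inverse (1 + 1 / real d)"
    using False by (simp add: field_simps)
  have "exp (-1) = inverse (exp (1::real))" by (rule exp_minus)
  also have "\<dots> \<le> inverse ((1 + 1 / real d) ^ d)"
    using h pos by (intro le_imp_inverse_le) auto
  also have "\<dots> = (real d / (real d + 1)) ^ d" by (simp add: eq power_inverse)
  finally show ?thesis .
qed

lemma cand_prob_bounds: "0 \<le> cand_prob V E g v" "cand_prob V E g v \<le> 1"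
  unfolding cand_prob_def by auto

theorem mainTheorem8:
  fixes V :: "'a set" and E :: "'a \<Rightarrow> 'a \<Rightarrow> bool" and B :: "'a set"
    and g :: "'a cfg" and t :: "'a \<Rightarrow> move option" and u :: 'a
  assumes "simple_graph V E"
    and "B \<subseteq> V"
    and "degree_stabilized V E B g"
    and "valid_transition V E B g t"
    and "u \<in> Vdist V E B 1"
    and "t u = Some Candidacy"
  shows "measure_pmf.prob (trans_dist V E g t)
           {g'. s_of g' u = Top \<and> (\<forall>v\<in>nbh V E u. s_of g' v = Bot)}
         \<ge> 1 / (exp 1 * (real (maxdeg V E) + 1))"
proof -
  note G = assms(1)[unfolded simple_graph_def]
  have finV: "finite V" using G by blast
  have uV: "u \<in> V" using assms(5) unfolding Vdist_def by blast
  have uB: "u \<notin> B"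
  proof
    assume "u \<in> B"
    then have "(u, u) \<in> adj V E ^^ 0" by simp
    then show False using assms(5) \<open>u \<in> B\<close> unfolding Vdist_def by blast
  qed
  have nB: "v \<notin> B" if "v \<in> nbh V E u" for v
  proof
    assume "v \<in> B"
    have "(u, v) \<in> adj V E ^^ 1" using that uV unfolding adj_def nbh_def by auto
    then show False using assms(5) \<open>v \<in> B\<close> unfolding Vdist_def by blast
  qed
  have nV: "v \<in> V" if "v \<in> nbh V E u" for v using that unfolding nbh_def by auto
  have valid: "\<forall>w\<in>V - B. t w = None \<or>
        (t w = Some Refresh \<and> refresh_enabled V E g w) \<or>
        (t w = Some Candidacy \<and> cand_enabled V E g w) \<or>
        (t w = Some Withdrawal \<and> withd_enabled V E g w)"
    using assms(4) unfolding valid_transition_def by blast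
  have ce: "cand_enabled V E g u"
  proof -
    have "u \<in> V - B" using uV uB by blast
    then show ?thesis using valid assms(6) by (metis move.distinct option.distinct(1) option.inject)
  qed
  have nbot: "s_of g v = Bot" if "v \<in> nbh V E u" for v
    using ce that unfolding cand_enabled_def by blast
  define A where "A = {v \<in> V. t v = Some Candidacy}"
  define S where "S = {v \<in> nbh V E u. t v = Some Candidacy}"
  define p where "p = (\<lambda>v. cand_prob V E g v)"
  define Bs where "Bs = (\<lambda>x. if x = u then {True} else if x \<in> S then {False} else (UNIV :: bool set))"
  have finA: "finite A" using finV unfolding A_def by auto
  have uA: "u \<in> A" using uV assms(6) unfolding A_def by auto
  have SA: "S \<subseteq> A" using nV unfolding S_def A_def by auto
  have uS: "u \<notin> S" using G unfolding S_def nbh_def by auto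
  have finS: "finite S" using finA SA finite_subset by blast
  let ?T = "{g'. s_of g' u = Top \<and> (\<forall>v\<in>nbh V E u. s_of g' v = Bot)}"
  have sub: "PiE_dflt A False Bs \<subseteq> step V E g t -` ?T"
  proof
    fix c assume c: "c \<in> PiE_dflt A False Bs"
    have cu: "c u" using c uA unfolding PiE_dflt_def Bs_def by auto
    have cv: "\<not> c v" if vS: "v \<in> S" for v
    proof -
      have "v \<in> A" "v \<noteq> u" using vS SA uS by auto
      then have "c v \<in> Bs v" using c unfolding PiE_dflt_def by blast
      then show ?thesis using vS \<open>v \<noteq> u\<close> unfolding Bs_def by simp
    qed
    have "s_of (step V E g t c) v = Bot" if v: "v \<in> nbh V E u" for v
    proof -
      have "v \<in> V - B" using nV nB v by auto
      then have "t v = None \<or> t v = Some Refresh \<or> t v = Some Candidacy \<or> t v = Some Withdrawal"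
        using valid by blast
      moreover have "t v = Some Candidacy \<Longrightarrow> v \<in> S" using v unfolding S_def by auto
      ultimately show ?thesis using nbot[OF v] cv
        unfolding step_def s_of_def by auto
    qed
    moreover have "s_of (step V E g t c) u = Top" using cu assms(6) unfolding step_def s_of_def by simp
    ultimately show "c \<in> step V E g t -` ?T" by simp
  qed
  have "measure_pmf.prob (coins V E g t) (PiE_dflt A False Bs)
        \<le> measure_pmf.prob (coins V E g t) (step V E g t -` ?T)"
    by (intro measure_pmf.finite_measure_mono sub) auto
  then have mono: "measure_pmf.prob (Pi_pmf A False (\<lambda>v. bernoulli_pmf (p v))) (PiE_dflt A False Bs)
        \<le> measure_pmf.prob (trans_dist V E g t) ?T"
    unfolding trans_dist_def coins_def A_def p_def by simp
  define f where "f = (\<lambda>x. measure_pmf.prob (bernoulli_pmf (p x)) (Bs x))"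
  have fu: "f u = p u" unfolding f_def Bs_def p_def
    by (simp add: measure_pmf_single cand_prob_bounds)
  have fS: "f x = 1 - p x" if "x \<in> S" for x using that uS unfolding f_def Bs_def p_def
    by (auto simp add: measure_pmf_single cand_prob_bounds)
  have fo: "f x = 1" if "x \<notin> S" "x \<noteq> u" for x using that unfolding f_def Bs_def by simp
  have "(\<Prod>x\<in>A. f x) = f u * (\<Prod>x\<in>A - {u}. f x)"
    using finA uA by (simp add: prod.remove)
  also have "(\<Prod>x\<in>A - {u}. f x) = (\<Prod>x\<in>S. f x)"
    using finA SA uS fo by (intro prod.mono_neutral_right) auto
  finally have prodeq: "(\<Prod>x\<in>A. f x) = p u * (\<Prod>x\<in>S. 1 - p x)"
    using fu fS by simp
  have meq: "measure_pmf.prob (Pi_pmf A False (\<lambda>v. bernoulli_pmf (p v))) (PiE_dflt A False Bs)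
     = p u * (\<Prod>x\<in>S. 1 - p x)"
    using measure_Pi_pmf_PiE_dflt[OF finA, of False "\<lambda>v. bernoulli_pmf (p v)" Bs] prodeq unfolding f_def by simp
  define d where "d = deg V E u"
  define D where "D = maxdeg V E"
  have xdeg: "x_of g w = deg V E w" if "w \<in> V - B" for w
    using assms(3) that unfolding degree_stabilized_def by blast
  have cnbh_fin: "finite (cnbh V E w)" for w using finV unfolding cnbh_def nbh_def by auto
  have degD: "deg V E w \<le> D" if "w \<in> V" for w
    unfolding D_def maxdeg_def using finV that by auto
  have pu: "p u \<ge> 1 / (real D + 1)"
  proof -
    have "Max (x_of g ` cnbh V E u) \<le> D"
    proof (subst Max_le_iff)
      show "finite (x_of g ` cnbh V E u)" using cnbh_fin by auto
      show "x_of g ` cnbh V E u \<noteq> {}" unfolding cnbh_def by auto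
      show "\<forall>a\<in>x_of g ` cnbh V E u. a \<le> D"
      proof
        fix a assume "a \<in> x_of g ` cnbh V E u"
        then obtain w where w: "w \<in> cnbh V E u" "a = x_of g w" by auto
        then have "w \<in> V - B" using uV uB nV nB unfolding cnbh_def by auto
        then show "a \<le> D" using w xdeg degD by auto
      qed
    qed
    then show ?thesis unfolding p_def cand_prob_def
      by (intro divide_left_mono) auto
  qed
  have pv: "1 - p v \<ge> real d / (real d + 1)" if v: "v \<in> S" for v
  proof -
    have vn: "v \<in> nbh V E u" using v unfolding S_def by auto
    have "u \<in> cnbh V E v" using vn uV G unfolding cnbh_def nbh_def by auto
    then have "x_of g u \<le> Max (x_of g ` cnbh V E v)" using cnbh_fin by auto
    then have "d \<le> Max (x_of g ` cnbh V E v)" using xdeg uV uB unfolding d_def by auto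
    then have "p v \<le> 1 / (real d + 1)" unfolding p_def cand_prob_def
      by (intro divide_left_mono) auto
    moreover have "1 - 1 / (real d + 1) = real d / (real d + 1)" by (simp add: field_simps)
    ultimately show ?thesis by linarith
  qed
  have cardS: "card S \<le> d" unfolding d_def deg_def S_def
    using finV by (intro card_mono) (auto simp: nbh_def)
  have "(real d / (real d + 1)) ^ d \<le> (real d / (real d + 1)) ^ card S"
    using cardS by (intro power_decreasing) auto
  also have "\<dots> = (\<Prod>x\<in>S. real d / (real d + 1))" by simp
  also have "\<dots> \<le> (\<Prod>x\<in>S. 1 - p x)"
    using pv by (intro prod_mono) auto
  finally have P: "exp (-1) \<le> (\<Prod>x\<in>S. 1 - p x)" using key_ineq[of d] by linarith
  have "1 / (exp 1 * (real D + 1)) = 1 / (real D + 1) * exp (-1)"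
    by (simp add: exp_minus field_simps)
  also have "\<dots> \<le> p u * (\<Prod>x\<in>S. 1 - p x)"
    using pu P cand_prob_bounds(1)[of V E g u] unfolding p_def by (intro mult_mono) auto
  finally show ?thesis using mono meq unfolding D_def by linarith
qed

end
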